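(* Let $H$ be a selfadjoint operator on a separable Hilbert space $\mathcal H$ with spectral family $\{E_\lambda\}_{\lambda\in\mathbb R}$. Let $f,g\in\mathcal H$ and $\lambda\in\mathbb R$, and suppose $\mu\mapsto\langle E_\mu f|g\rangle$ is differentiable at $\lambda$. Then for every $\chi\in C_0^\infty(\mathbb R)$ the function $\mu\mapsto\langle E_\mu\chi(H)f|g\rangle$ is differentiable at $\lambda$ and $$\frac{d\langle E_\lambda\chi(H)f|g\rangle}{d\lambda}=\chi(\lambda)\frac{d\langle E_\lambda f|g\rangle}{d\lambda}.$$
   Context: Here $C_0^\infty(\mathbb R)$ denotes the set of infinitely differentiable complex-valued functions on $\mathbb R$ such that the function and all its derivatives tend to zero at infinity. Inner products are linear in the first argument. *)

theory Defs
  imports "HOL-Analysis.Analysis"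
begin

text \<open>Model of a separable complex Hilbert space: l2(I) for an index set I of naturals
  (every separable Hilbert space is unitarily equivalent to one of these).
  Inner product is linear in the first argument.\<close>

type_synonym vec = "nat \<Rightarrow> complex"

definition l2 :: "nat set \<Rightarrow> vec set" where
  "l2 I = {x. (\<forall>n. n \<notin> I \<longrightarrow> x n = 0) \<and> summable (\<lambda>n. (cmod (x n))\<^sup>2)}"

definition ip :: "vec \<Rightarrow> vec \<Rightarrow> complex" where
  "ip x y = (\<Sum>n. x n * cnj (y n))"

definition vnorm :: "vec \<Rightarrow> real" where
  "vnorm x = sqrt (\<Sum>n. (cmod (x n))\<^sup>2)"

definition lincomb :: "complex \<Rightarrow> vec \<Rightarrow> complex \<Rightarrow> vec \<Rightarrow> vec" where
  "lincomb a x b y = (\<lambda>n. a * x n + b * y n)"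

definition bounded_op :: "nat set \<Rightarrow> (vec \<Rightarrow> vec) \<Rightarrow> bool" where
  "bounded_op I T \<longleftrightarrow>
     (\<forall>x\<in>l2 I. T x \<in> l2 I) \<and>
     (\<forall>x\<in>l2 I. \<forall>y\<in>l2 I. \<forall>a b. T (lincomb a x b y) = lincomb a (T x) b (T y)) \<and>
     (\<exists>C. \<forall>x\<in>l2 I. vnorm (T x) \<le> C * vnorm x)"

definition orth_proj :: "nat set \<Rightarrow> (vec \<Rightarrow> vec) \<Rightarrow> bool" where
  "orth_proj I P \<longleftrightarrow> bounded_op I P \<and>
     (\<forall>x\<in>l2 I. P (P x) = P x) \<and>
     (\<forall>x\<in>l2 I. \<forall>y\<in>l2 I. ip (P x) y = ip x (P y))"

definition spectral_family :: "nat set \<Rightarrow> (real \<Rightarrow> vec \<Rightarrow> vec) \<Rightarrow> bool" where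
  "spectral_family I E \<longleftrightarrow>
     (\<forall>t. orth_proj I (E t)) \<and>
     (\<forall>s t. \<forall>x\<in>l2 I. E s (E t x) = E (min s t) x) \<and>
     (\<forall>t. \<forall>x\<in>l2 I. ((\<lambda>s. vnorm (\<lambda>n. E s x n - E t x n)) \<longlongrightarrow> 0) (at_right t)) \<and>
     (\<forall>x\<in>l2 I. ((\<lambda>s. vnorm (E s x)) \<longlongrightarrow> 0) at_bot) \<and>
     (\<forall>x\<in>l2 I. ((\<lambda>s. vnorm (\<lambda>n. E s x n - x n)) \<longlongrightarrow> 0) at_top)"

definition spec_meas :: "(real \<Rightarrow> vec \<Rightarrow> vec) \<Rightarrow> vec \<Rightarrow> real measure" where
  "spec_meas E x = interval_measure (\<lambda>t. (vnorm (E t x))\<^sup>2)"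

text \<open>The integral of phi against the complex measure d<E_t x|y>, obtained by
  polarisation: <E x|y> = 1/4 sum_k i^k ||E (x + i^k y)||^2.\<close>

definition spec_int :: "(real \<Rightarrow> vec \<Rightarrow> vec) \<Rightarrow> (real \<Rightarrow> complex) \<Rightarrow> vec \<Rightarrow> vec \<Rightarrow> complex" where
  "spec_int E \<phi> x y =
     (\<Sum>k<4::nat. \<i> ^ k * (LINT t|spec_meas E (lincomb 1 x (\<i> ^ k) y). \<phi> t)) / 4"

definition fcalc :: "nat set \<Rightarrow> (real \<Rightarrow> vec \<Rightarrow> vec) \<Rightarrow> (real \<Rightarrow> complex) \<Rightarrow> vec \<Rightarrow> vec" where
  "fcalc I E \<phi> x = (THE z. z \<in> l2 I \<and> (\<forall>y\<in>l2 I. ip z y = spec_int E \<phi> x y))"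

definition selfadjoint :: "nat set \<Rightarrow> vec set \<Rightarrow> (vec \<Rightarrow> vec) \<Rightarrow> bool" where
  "selfadjoint I D H \<longleftrightarrow>
     D \<subseteq> l2 I \<and>
     (\<forall>x\<in>D. \<forall>y\<in>D. \<forall>a b. lincomb a x b y \<in> D \<and> H (lincomb a x b y) = lincomb a (H x) b (H y)) \<and>
     (\<forall>x\<in>D. H x \<in> l2 I) \<and>
     (\<forall>x\<in>l2 I. \<forall>\<epsilon>>0. \<exists>d\<in>D. vnorm (\<lambda>n. x n - d n) < \<epsilon>) \<and>
     (\<forall>y\<in>l2 I. y \<in> D \<longleftrightarrow> (\<exists>z\<in>l2 I. \<forall>x\<in>D. ip (H x) y = ip x z)) \<and>
     (\<forall>x\<in>D. \<forall>y\<in>D. ip (H x) y = ip x (H y))"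

definition spectral_family_of :: "nat set \<Rightarrow> vec set \<Rightarrow> (vec \<Rightarrow> vec) \<Rightarrow> (real \<Rightarrow> vec \<Rightarrow> vec) \<Rightarrow> bool" where
  "spectral_family_of I D H E \<longleftrightarrow>
     spectral_family I E \<and>
     (\<forall>x\<in>l2 I. x \<in> D \<longleftrightarrow> integrable (spec_meas E x) (\<lambda>t. t\<^sup>2)) \<and>
     (\<forall>x\<in>D. \<forall>y\<in>D. ip (H x) y = spec_int E (\<lambda>t. complex_of_real t) x y)"

text \<open>C_0^infinity(R): smooth complex functions all of whose derivatives vanish at infinity.\<close>

definition C0_infty :: "(real \<Rightarrow> complex) \<Rightarrow> bool" where
  "C0_infty chi \<longleftrightarrow> (\<exists>d :: nat \<Rightarrow> real \<Rightarrow> complex. d 0 = chi \<and>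
     (\<forall>k x. (d k has_vector_derivative d (Suc k) x) (at x)) \<and>
     (\<forall>k. (d k \<longlongrightarrow> 0) at_infinity))"

end

theory Submission
  imports Defs "HOL-Probability.Distribution_Functions"
begin

lemma sq_sum_le: "((p::real) + q)\<^sup>2 \<le> 2 * p\<^sup>2 + 2 * q\<^sup>2"
proof -
  have "(p+q)\<^sup>2 + (p-q)\<^sup>2 = 2 * p\<^sup>2 + 2 * q\<^sup>2" by (simp add: power2_eq_square algebra_simps)
  moreover have "0 \<le> (p-q)\<^sup>2" by simp
  ultimately show ?thesis by linarith
qed

lemma two_mult_le: "2 * ((p::real) * q) \<le> p\<^sup>2 + q\<^sup>2"
proof -
  have "(p-q)\<^sup>2 = p\<^sup>2 + q\<^sup>2 - 2 * (p * q)" by (simp add: power2_eq_square algebra_simps)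
  moreover have "0 \<le> (p-q)\<^sup>2" by simp
  ultimately show ?thesis by linarith
qed

definition sqs :: "vec \<Rightarrow> bool" where
  "sqs x \<longleftrightarrow> summable (\<lambda>n. (cmod (x n))\<^sup>2)"

lemma l2_sqs: "x \<in> l2 I \<Longrightarrow> sqs x"
  by (simp add: l2_def sqs_def)

lemma sqs_lincomb: assumes "sqs x" "sqs y" shows "sqs (lincomb a x b y)"
proof -
  have S: "summable (\<lambda>n. 2 * (cmod a)\<^sup>2 * (cmod (x n))\<^sup>2 + 2 * (cmod b)\<^sup>2 * (cmod (y n))\<^sup>2)"
    using assms unfolding sqs_def by (intro summable_add summable_mult) auto
  have B: "(cmod (a * x n + b * y n))\<^sup>2 \<le> 2 * (cmod a)\<^sup>2 * (cmod (x n))\<^sup>2 + 2 * (cmod b)\<^sup>2 * (cmod (y n))\<^sup>2" for n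
  proof -
    have "cmod (a * x n + b * y n) \<le> cmod a * cmod (x n) + cmod b * cmod (y n)"
      by (metis norm_mult norm_triangle_ineq)
    hence "(cmod (a * x n + b * y n))\<^sup>2 \<le> (cmod a * cmod (x n) + cmod b * cmod (y n))\<^sup>2"
      by (simp add: power_mono)
    also have "\<dots> \<le> 2 * (cmod a * cmod (x n))\<^sup>2 + 2 * (cmod b * cmod (y n))\<^sup>2"
      by (rule sq_sum_le)
    also have "\<dots> = 2 * (cmod a)\<^sup>2 * (cmod (x n))\<^sup>2 + 2 * (cmod b)\<^sup>2 * (cmod (y n))\<^sup>2"
      by (simp add: power_mult_distrib)
    finally show ?thesis .
  qed
  show ?thesis unfolding sqs_def lincomb_def
    by (rule summable_comparison_test'[OF S, where N=0]) (simp only: real_norm_def abs_power2 B)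
qed

lemma l2_lincomb: assumes "x \<in> l2 I" "y \<in> l2 I" shows "lincomb a x b y \<in> l2 I"
  using assms sqs_lincomb[of x y a b] unfolding l2_def sqs_def[symmetric] by (auto simp: lincomb_def)

lemma ip_summable: assumes "sqs x" "sqs y" shows "summable (\<lambda>n. norm (x n * cnj (y n)))"
proof -
  have S: "summable (\<lambda>n. (cmod (x n))\<^sup>2 + (cmod (y n))\<^sup>2)"
    using assms unfolding sqs_def by (intro summable_add) auto
  have B: "norm (norm (x n * cnj (y n))) \<le> (cmod (x n))\<^sup>2 + (cmod (y n))\<^sup>2" for n
  proof -
    have "2 * (cmod (x n) * cmod (y n)) \<le> (cmod (x n))\<^sup>2 + (cmod (y n))\<^sup>2"
      by (rule two_mult_le)
    moreover have "0 \<le> cmod (x n) * cmod (y n)" by simp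
    moreover have "norm (norm (x n * cnj (y n))) = cmod (x n) * cmod (y n)" by (simp add: norm_mult)
    ultimately show ?thesis by linarith
  qed
  have "\<exists>N. \<forall>n\<ge>N. norm (norm (x n * cnj (y n))) \<le> (cmod (x n))\<^sup>2 + (cmod (y n))\<^sup>2"
    using B by blast
  thus ?thesis by (rule summable_comparison_test[of "\<lambda>n. norm (x n * cnj (y n))" "\<lambda>n. (cmod (x n))\<^sup>2 + (cmod (y n))\<^sup>2", OF _ S])
qed

lemma ip_summable': "sqs x \<Longrightarrow> sqs y \<Longrightarrow> summable (\<lambda>n. x n * cnj (y n))"
  by (rule summable_norm_cancel[OF ip_summable])

lemma ip_left: assumes "sqs x" "sqs y" "sqs z"
  shows "ip (lincomb a x b y) z = a * ip x z + b * ip y z"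
proof -
  have "(\<lambda>n. (a * x n + b * y n) * cnj (z n)) = (\<lambda>n. a * (x n * cnj (z n)) + b * (y n * cnj (z n)))"
    by (auto simp: algebra_simps)
  moreover have "(\<Sum>n. a * (x n * cnj (z n)) + b * (y n * cnj (z n))) = (\<Sum>n. a * (x n * cnj (z n))) + (\<Sum>n. b * (y n * cnj (z n)))"
    by (rule suminf_add[symmetric]) (intro summable_mult ip_summable' assms)+
  ultimately show ?thesis unfolding ip_def lincomb_def
    using ip_summable'[OF assms(1,3)] ip_summable'[OF assms(2,3)]
    by (simp only: suminf_mult)
qed

lemma ip_right: assumes "sqs x" "sqs y" "sqs z"
  shows "ip z (lincomb a x b y) = cnj a * ip z x + cnj b * ip z y"
proof -
  have "(\<lambda>n. z n * cnj (a * x n + b * y n)) = (\<lambda>n. cnj a * (z n * cnj (x n)) + cnj b * (z n * cnj (y n)))"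
    by (auto simp: algebra_simps)
  moreover have "(\<Sum>n. cnj a * (z n * cnj (x n)) + cnj b * (z n * cnj (y n))) = (\<Sum>n. cnj a * (z n * cnj (x n))) + (\<Sum>n. cnj b * (z n * cnj (y n)))"
    by (rule suminf_add[symmetric]) (intro summable_mult ip_summable' assms)+
  ultimately show ?thesis unfolding ip_def lincomb_def
    using ip_summable'[OF assms(3,1)] ip_summable'[OF assms(3,2)]
    by (simp only: suminf_mult)
qed

lemma ip_cnj: assumes "sqs x" "sqs y" shows "cnj (ip x y) = ip y x"
proof -
  have "(\<lambda>n. cnj (x n * cnj (y n))) sums cnj (ip x y)"
    using ip_summable'[OF assms] unfolding ip_def by (intro sums_cnj[THEN iffD2]) (simp add: summable_sums)
  thus ?thesis unfolding ip_def by (simp add: sums_unique mult.commute)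
qed

lemma ip_self: assumes "sqs x" shows "ip x x = complex_of_real ((vnorm x)\<^sup>2)"
proof -
  have s: "summable (\<lambda>n. (cmod (x n))\<^sup>2)" using assms by (simp add: sqs_def)
  have "(\<lambda>n. x n * cnj (x n)) = (\<lambda>n. complex_of_real ((cmod (x n))\<^sup>2))"
    by (auto simp: complex_mult_cnj cmod_power2 simp del: of_real_power)
  hence "ip x x = complex_of_real (\<Sum>n. (cmod (x n))\<^sup>2)"
    unfolding ip_def using s by (simp add: suminf_of_real)
  moreover have "(vnorm x)\<^sup>2 = (\<Sum>n. (cmod (x n))\<^sup>2)"
    unfolding vnorm_def using s by (simp add: suminf_nonneg)
  ultimately show ?thesis by simp
qed

lemma vnorm_minus_commute: "vnorm (\<lambda>n. x n - y n) = vnorm (\<lambda>n. y n - x n)"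
  unfolding vnorm_def by (simp add: norm_minus_commute)

lemma minus_lincomb: "(\<lambda>n. x n - y n) = lincomb 1 x (-1) y"
  by (simp add: lincomb_def)

locale sfam =
  fixes I :: "nat set" and E :: "real \<Rightarrow> vec \<Rightarrow> vec"
  assumes sf: "spectral_family I E"
begin

lemma E_orth: "orth_proj I (E t)"
  using sf unfolding spectral_family_def by auto

lemma E_l2: "x \<in> l2 I \<Longrightarrow> E t x \<in> l2 I"
  using E_orth[of t] unfolding orth_proj_def bounded_op_def by auto

lemma E_sqs: "x \<in> l2 I \<Longrightarrow> sqs (E t x)"
  using E_l2 l2_sqs by blast

lemma E_lin: "x \<in> l2 I \<Longrightarrow> y \<in> l2 I \<Longrightarrow> E t (lincomb a x b y) = lincomb a (E t x) b (E t y)"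
  using E_orth[of t] unfolding orth_proj_def bounded_op_def by auto

lemma E_sym: "x \<in> l2 I \<Longrightarrow> y \<in> l2 I \<Longrightarrow> ip (E t x) y = ip x (E t y)"
  using E_orth[of t] unfolding orth_proj_def by auto

lemma E_comp: "x \<in> l2 I \<Longrightarrow> E s (E t x) = E (min s t) x"
  using sf unfolding spectral_family_def by auto

lemma E_idem: "x \<in> l2 I \<Longrightarrow> E t (E t x) = E t x"
  using E_comp[of x t t] by simp

lemma E_ipE: "x \<in> l2 I \<Longrightarrow> y \<in> l2 I \<Longrightarrow> ip (E t x) (E t y) = ip (E t x) y"
  using E_sym[of x "E t y" t] E_sym[of x y t] E_idem[of y t] E_l2[of y t] by simp

lemma pyth: assumes u: "u \<in> l2 I"
  shows "(vnorm u)\<^sup>2 - (vnorm (E s u))\<^sup>2 = (vnorm (\<lambda>n. u n - E s u n))\<^sup>2"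
proof -
  let ?v = "E s u"
  have su: "sqs u" using u l2_sqs by blast
  have sv: "sqs ?v" using u E_sqs by blast
  have "ip (lincomb 1 u (-1) ?v) (lincomb 1 u (-1) ?v)
     = ip u u - ip u ?v - ip ?v u + ip ?v ?v"
    using su sv sqs_lincomb[OF su sv, of 1 "-1"]
    by (simp add: ip_left ip_right)
  also have "ip ?v ?v = ip ?v u" using E_ipE[OF u u] .
  also have "ip u ?v = ip ?v u" using E_sym[OF u u] by simp
  finally have "ip (lincomb 1 u (-1) ?v) (lincomb 1 u (-1) ?v) = ip u u - ip ?v ?v"
    using E_ipE[OF u u] by simp
  hence "complex_of_real ((vnorm (\<lambda>n. u n - E s u n))\<^sup>2) = complex_of_real ((vnorm u)\<^sup>2 - (vnorm (E s u))\<^sup>2)"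
    using su sv sqs_lincomb[OF su sv, of 1 "-1"] by (simp add: ip_self minus_lincomb)
  thus ?thesis by (simp only: of_real_eq_iff)
qed

definition G :: "vec \<Rightarrow> real \<Rightarrow> real" where
  "G x t = (vnorm (E t x))\<^sup>2"

lemma G_diff: assumes x: "x \<in> l2 I" and st: "s \<le> t"
  shows "G x t - G x s = (vnorm (\<lambda>n. E t x n - E s x n))\<^sup>2"
  using pyth[OF E_l2[OF x, of t], of s] E_comp[OF x, of s t] st unfolding G_def by (simp add: min_def)

lemma G_mono: "x \<in> l2 I \<Longrightarrow> s \<le> t \<Longrightarrow> G x s \<le> G x t"
  using G_diff[of x s t] by (metis diff_ge_0_iff_ge zero_le_power2)

lemma G_nonneg: "0 \<le> G x t"
  by (simp add: G_def)

lemma G_rc: assumes x: "x \<in> l2 I" shows "continuous (at_right t) (G x)"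
proof -
  have lim: "((\<lambda>s. vnorm (\<lambda>n. E s x n - E t x n)) \<longlongrightarrow> 0) (at_right t)"
    using sf x unfolding spectral_family_def by auto
  have "((\<lambda>s. G x t + (vnorm (\<lambda>n. E s x n - E t x n))\<^sup>2) \<longlongrightarrow> G x t + 0\<^sup>2) (at_right t)"
    by (intro tendsto_intros lim)
  moreover have "eventually (\<lambda>s. G x t + (vnorm (\<lambda>n. E s x n - E t x n))\<^sup>2 = G x s) (at_right t)"
    using eventually_at_right_less[of t]
  proof eventually_elim
    case (elim s) thus ?case using G_diff[OF x, of t s] by simp
  qed
  ultimately have "(G x \<longlongrightarrow> G x t) (at_right t)"
    by (simp add: tendsto_cong)
  thus ?thesis by (simp add: continuous_within)
qed

lemma G_bot: assumes x: "x \<in> l2 I" shows "(G x \<longlongrightarrow> 0) at_bot"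
proof -
  have "\<forall>x\<in>l2 I. ((\<lambda>s. vnorm (E s x)) \<longlongrightarrow> 0) at_bot"
    using sf unfolding spectral_family_def by (elim conjE)
  hence lim: "((\<lambda>s. vnorm (E s x)) \<longlongrightarrow> 0) at_bot" using x by blast
  have "((\<lambda>s. (vnorm (E s x))\<^sup>2) \<longlongrightarrow> 0\<^sup>2) at_bot" by (intro tendsto_intros lim)
  thus ?thesis by (simp add: G_def[abs_def])
qed

lemma G_top: assumes x: "x \<in> l2 I" shows "(G x \<longlongrightarrow> (vnorm x)\<^sup>2) at_top"
proof -
  have "\<forall>x\<in>l2 I. ((\<lambda>s. vnorm (\<lambda>n. E s x n - x n)) \<longlongrightarrow> 0) at_top"
    using sf unfolding spectral_family_def by (elim conjE)
  hence lim: "((\<lambda>s. vnorm (\<lambda>n. E s x n - x n)) \<longlongrightarrow> 0) at_top" using x by blast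
  have "((\<lambda>s. (vnorm x)\<^sup>2 - (vnorm (\<lambda>n. E s x n - x n))\<^sup>2) \<longlongrightarrow> (vnorm x)\<^sup>2 - 0\<^sup>2) at_top"
    by (intro tendsto_intros lim)
  moreover have "(vnorm x)\<^sup>2 - (vnorm (\<lambda>n. E s x n - x n))\<^sup>2 = G x s" for s
    using pyth[OF x, of s] vnorm_minus_commute[of "E s x" x] unfolding G_def by simp
  ultimately show ?thesis by simp
qed

lemma G_le: assumes x: "x \<in> l2 I" shows "G x t \<le> (vnorm x)\<^sup>2"
  using pyth[OF x, of t] unfolding G_def by (metis diff_ge_0_iff_ge zero_le_power2)

end

lemma stieltjes_parts:
  fixes F :: "real \<Rightarrow> real" and c c' :: "real \<Rightarrow> complex"
  assumes mono: "\<And>x y. x \<le> y \<Longrightarrow> F x \<le> F y" and rc: "\<And>a. continuous (at_right a) F"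
    and bot: "(F \<longlongrightarrow> 0) at_bot" and top: "(F \<longlongrightarrow> m) at_top"
    and dc: "\<And>t. (c has_vector_derivative c' t) (at t)" and cc: "continuous_on UNIV c'"
    and ab: "a \<le> b"
  shows "(LINT s:{a<..b}|interval_measure F. c s) = c b * F b - c a * F a - integral {a..b} (\<lambda>t. of_real (F t) * c' t)"
proof -
  define M where "M = interval_measure F"
  have Fnn: "0 \<le> F y" for y
    using bot by (rule tendsto_upperbound) (auto simp: eventually_at_bot_linorder mono intro!: exI[of _ y])
  have m: "0 \<le> m"
    using top by (rule tendsto_lowerbound) (auto simp: Fnn)
  interpret finite_borel_measure M
    unfolding M_def by (rule finite_borel_measure_interval_measure[OF mono rc bot top m])
  interpret P: pair_sigma_finite M lborel
    by (simp add: pair_sigma_finite_def lborel.sigma_finite_measure_axioms sigma_finite_measure_axioms)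
  have sM[simp, measurable_cong]: "sets M = sets borel" unfolding M_def by simp
  have spM[simp]: "space M = UNIV" unfolding M_def by simp
  have cont_c: "continuous_on UNIV c"
    using dc by (meson continuous_at_imp_continuous_on has_vector_derivative_continuous)
  have [measurable]: "c \<in> borel_measurable borel" "c' \<in> borel_measurable borel"
    using cont_c cc by (auto intro: borel_measurable_continuous_onI)
  have monoF: "mono F" using mono by (simp add: mono_def)
  have [measurable]: "F \<in> borel_measurable borel" using borel_measurable_mono[OF monoF] .
  obtain K where K: "\<And>t. t \<in> {a..b} \<Longrightarrow> norm (c' t) \<le> K"
    using compact_imp_bounded[OF compact_continuous_image[OF continuous_on_subset[OF cc] compact_Icc]]
    unfolding bounded_iff by blast
  obtain K2 where K2: "\<And>t. t \<in> {a..b} \<Longrightarrow> norm (c t) \<le> K2"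
    using compact_imp_bounded[OF compact_continuous_image[OF continuous_on_subset[OF cont_c] compact_Icc]]
    unfolding bounded_iff by blast
  have Kn: "0 \<le> K" using K[of a] ab by (smt (verit) atLeastAtMost_iff norm_ge_zero)
  define h where "h = (\<lambda>s t. if a < s \<and> s \<le> t \<and> t \<le> b then c' t else 0)"
  have hm: "(\<lambda>(s,t). h s t) \<in> borel_measurable (M \<Otimes>\<^sub>M lborel)"
  proof -
    have "(\<lambda>(s,t). h s t) \<in> borel_measurable (borel \<Otimes>\<^sub>M borel)"
      unfolding h_def by measurable
    moreover have "sets (M \<Otimes>\<^sub>M lborel) = sets (borel \<Otimes>\<^sub>M borel)"
      by (intro sets_pair_measure_cong) auto
    ultimately show ?thesis using measurable_cong_sets by blast
  qed
  have hint: "integrable (M \<Otimes>\<^sub>M lborel) (\<lambda>(s,t). h s t)"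
  proof (rule integrableI_bounded_set[where A="{a<..b} \<times> {a..b}" and B=K])
    show "{a<..b} \<times> {a..b} \<in> sets (M \<Otimes>\<^sub>M lborel)" by (intro pair_measureI) auto
    show "emeasure (M \<Otimes>\<^sub>M lborel) ({a<..b} \<times> {a..b}) < \<infinity>"
      by (subst lborel.emeasure_pair_measure_Times) (use ab in \<open>auto simp: less_top[symmetric] ennreal_mult_eq_top_iff emeasure_finite emeasure_lborel_Icc\<close>)
    show "AE x in M \<Otimes>\<^sub>M lborel. x \<in> {a<..b} \<times> {a..b} \<longrightarrow> norm (case x of (s, t) \<Rightarrow> h s t) \<le> K"
      using K Kn by (auto simp: h_def)
    show "AE x in M \<Otimes>\<^sub>M lborel. x \<notin> {a<..b} \<times> {a..b} \<longrightarrow> (case x of (s, t) \<Rightarrow> h s t) = 0"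
      by (intro AE_I2) (auto simp: h_def split: prod.splits)
  qed (use hm in auto)
  have fub: "(\<integral>t. (\<integral>s. h s t \<partial>M) \<partial>lborel) = (\<integral>s. (\<integral>t. h s t \<partial>lborel) \<partial>M)"
    using P.Fubini_integral[of h] hint by simp
  have in1: "(\<integral>s. h s t \<partial>M) = indicator {a..b} t *\<^sub>R (of_real (F t - F a) * c' t)" for t
  proof (cases "a \<le> t \<and> t \<le> b")
    case True
    have "(\<lambda>s. h s t) = (\<lambda>s. of_real (indicator {a<..t} s) * c' t)"
      using True by (auto simp: h_def indicator_def)
    hence "(\<integral>s. h s t \<partial>M) = of_real (measure M {a<..t}) * c' t"
      by simp
    also have "measure M {a<..t} = F t - F a"
      unfolding M_def using True by (simp add: measure_interval_measure_Ioc mono rc)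
    finally show ?thesis using True by simp
  next
    case False
    hence "(\<lambda>s. h s t) = (\<lambda>s. 0)" by (auto simp: h_def fun_eq_iff)
    thus ?thesis using False by simp
  qed
  have in2: "(\<integral>t. h s t \<partial>lborel) = indicator {a<..b} s *\<^sub>R (c b - c s)" for s
  proof (cases "a < s \<and> s \<le> b")
    case True
    have "(\<lambda>t. h s t) = (\<lambda>t. indicator {s..b} t *\<^sub>R c' t)"
      using True by (auto simp: h_def indicator_def)
    hence "(\<integral>t. h s t \<partial>lborel) = (LBINT t:{s..b}. c' t)"
      by (simp add: set_lebesgue_integral_def)
    also have "\<dots> = (LBINT t=s..b. c' t)" using True by (simp add: interval_integral_Icc)
    also have "\<dots> = c b - c s"
      using True by (intro interval_integral_FTC_finite continuous_on_subset[OF cc])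
        (auto intro: has_vector_derivative_at_within dc)
    finally show ?thesis using True by simp
  next
    case False
    hence "(\<lambda>t. h s t) = (\<lambda>t. 0)" by (auto simp: h_def fun_eq_iff)
    thus ?thesis using False by simp
  qed
  have si1: "set_integrable lborel {a..b} (\<lambda>t. of_real (F t) * c' t)"
    unfolding set_integrable_def
  proof (rule integrableI_bounded_set[where A="{a..b}" and B="F b * K"])
    show "AE x in lborel. x \<in> {a..b} \<longrightarrow> norm (indicator {a..b} x *\<^sub>R (of_real (F x) * c' x)) \<le> F b * K"
      using K Fnn mono by (auto simp: norm_mult intro!: mult_mono)
  qed (use ab in \<open>auto simp: emeasure_lborel_Icc\<close>)
  have si2: "set_integrable lborel {a..b} c'"
    by (intro borel_integrable_atLeastAtMost' continuous_on_subset[OF cc]) auto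
  have si3: "set_integrable M {a<..b} c"
    unfolding set_integrable_def
  proof (rule integrableI_bounded_set[where A="{a<..b}" and B="K2"])
    show "AE x in M. x \<in> {a<..b} \<longrightarrow> norm (indicator {a<..b} x *\<^sub>R c x) \<le> K2"
      using K2 by auto
  qed (auto simp: less_top[symmetric] emeasure_finite)
  have "(\<integral>t. (\<integral>s. h s t \<partial>M) \<partial>lborel) = (LBINT t:{a..b}. of_real (F t) * c' t - of_real (F a) * c' t)"
    unfolding in1 set_lebesgue_integral_def by (simp add: algebra_simps)
  also have "\<dots> = (LBINT t:{a..b}. of_real (F t) * c' t) - of_real (F a) * (LBINT t:{a..b}. c' t)"
    using si1 si2 by (subst set_integral_diff(2)) (auto intro: set_integrable_mult_right)
  also have "(LBINT t:{a..b}. c' t) = c b - c a"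
    using ab interval_integral_Icc[of a b c', symmetric]
      interval_integral_FTC_finite[of a b c' c] continuous_on_subset[OF cc]
    by (auto intro: has_vector_derivative_at_within dc)
  also have "(LBINT t:{a..b}. of_real (F t) * c' t) = integral {a..b} (\<lambda>t. of_real (F t) * c' t)"
    using set_borel_integral_eq_integral(2)[OF si1] .
  finally have L: "(\<integral>t. (\<integral>s. h s t \<partial>M) \<partial>lborel) = integral {a..b} (\<lambda>t. of_real (F t) * c' t) - of_real (F a) * (c b - c a)" .
  have "(\<integral>s. (\<integral>t. h s t \<partial>lborel) \<partial>M) = (LINT s:{a<..b}|M. c b - c s)"
    unfolding in2 set_lebesgue_integral_def by simp
  also have "\<dots> = (LINT s:{a<..b}|M. c b) - (LINT s:{a<..b}|M. c s)"
    using si3 by (subst set_integral_diff(2)) (auto simp: set_integrable_def less_top[symmetric] emeasure_finite)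
  also have "(LINT s:{a<..b}|M. c b) = of_real (F b - F a) * c b"
    unfolding set_lebesgue_integral_def M_def using ab by (simp add: measure_interval_measure_Ioc mono rc scaleR_conv_of_real)
  finally have R: "(\<integral>s. (\<integral>t. h s t \<partial>lborel) \<partial>M) = of_real (F b - F a) * c b - (LINT s:{a<..b}|M. c s)" .
  from fub L R show ?thesis unfolding M_def[symmetric]
    by (simp add: algebra_simps)
qed

lemma interval_measure_finite:
  fixes F :: "real \<Rightarrow> real"
  assumes mono: "\<And>x y. x \<le> y \<Longrightarrow> F x \<le> F y" and rc: "\<And>a. continuous (at_right a) F"
    and bot: "(F \<longlongrightarrow> 0) at_bot" and top: "(F \<longlongrightarrow> m) at_top"
  shows "finite_measure (interval_measure F)" and "measure (interval_measure F) UNIV = m"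
    and "\<And>y. 0 \<le> F y" and "0 \<le> m"
proof -
  show Fnn: "0 \<le> F y" for y
    using bot by (rule tendsto_upperbound) (auto simp: eventually_at_bot_linorder mono intro!: exI[of _ y])
  show m: "0 \<le> m"
    using top by (rule tendsto_lowerbound) (auto simp: Fnn)
  interpret finite_borel_measure "interval_measure F"
    by (rule finite_borel_measure_interval_measure[OF mono rc bot top m])
  show "finite_measure (interval_measure F)" by unfold_locales
  show "measure (interval_measure F) UNIV = m"
    using interval_measure_UNIV[OF mono rc bot top m] m by (simp add: measure_def)
qed

lemma mono_times_cont_integrable:
  fixes F :: "real \<Rightarrow> real" and c' :: "real \<Rightarrow> complex"
  assumes mono: "\<And>x y. x \<le> y \<Longrightarrow> F x \<le> F y" and cc: "continuous_on UNIV c'"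
  shows "(\<lambda>t. of_real (F t) * c' t) integrable_on {a..b}"
proof (cases "a \<le> b")
  case False
  thus ?thesis by (simp add: integrable_on_empty)
next
  case ab: True
  have [measurable]: "c' \<in> borel_measurable borel"
    using cc by (auto intro: borel_measurable_continuous_onI)
  have monoF: "mono F" using mono by (simp add: mono_def)
  have [measurable]: "F \<in> borel_measurable borel" using borel_measurable_mono[OF monoF] .
  obtain K where K: "\<And>t. t \<in> {a..b} \<Longrightarrow> norm (c' t) \<le> K"
    using compact_imp_bounded[OF compact_continuous_image[OF continuous_on_subset[OF cc] compact_Icc]]
    unfolding bounded_iff by blast
  have si1: "set_integrable lborel {a..b} (\<lambda>t. of_real (F t) * c' t)"
    unfolding set_integrable_def
  proof (rule integrableI_bounded_set[where A="{a..b}" and B="(\<bar>F a\<bar> + \<bar>F b\<bar>) * K"])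
    show "AE x in lborel. x \<in> {a..b} \<longrightarrow> norm (indicator {a..b} x *\<^sub>R (of_real (F x) * c' x)) \<le> (\<bar>F a\<bar> + \<bar>F b\<bar>) * K"
    proof (intro AE_I2 impI)
      fix x assume x: "x \<in> {a..b}"
      have "\<bar>F x\<bar> \<le> \<bar>F a\<bar> + \<bar>F b\<bar>" using mono[of a x] mono[of x b] x by auto
      moreover have "norm (c' x) \<le> K" using K x .
      ultimately have "\<bar>F x\<bar> * norm (c' x) \<le> (\<bar>F a\<bar> + \<bar>F b\<bar>) * K"
        by (intro mult_mono) auto
      thus "norm (indicator {a..b} x *\<^sub>R (of_real (F x) * c' x)) \<le> (\<bar>F a\<bar> + \<bar>F b\<bar>) * K"
        using x by (simp add: norm_mult)
    qed
  qed (use ab in \<open>auto simp: emeasure_lborel_Icc\<close>)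
  thus ?thesis by (rule set_borel_integral_eq_integral(1))
qed

lemma stieltjes_lim:
  fixes F :: "real \<Rightarrow> real" and c c' :: "real \<Rightarrow> complex"
  assumes mono: "\<And>x y. x \<le> y \<Longrightarrow> F x \<le> F y" and rc: "\<And>a. continuous (at_right a) F"
    and bot: "(F \<longlongrightarrow> 0) at_bot" and top: "(F \<longlongrightarrow> m) at_top"
    and dc: "\<And>t. (c has_vector_derivative c' t) (at t)" and cc: "continuous_on UNIV c'"
    and cb: "\<And>t. norm (c t) \<le> B"
  shows "(\<lambda>n. c (real n) * F (real n) - c (- real n) * F (- real n)
      - integral {- real n..real n} (\<lambda>t. of_real (F t) * c' t)) \<longlonglongrightarrow> (LINT s|interval_measure F. c s)"
proof -
  define M where "M = interval_measure F"
  interpret finite_measure M unfolding M_def by (rule interval_measure_finite(1)[OF mono rc bot top])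
  have sM[simp, measurable_cong]: "sets M = sets borel" unfolding M_def by simp
  have spM[simp]: "space M = UNIV" unfolding M_def by simp
  have cont_c: "continuous_on UNIV c"
    using dc by (meson continuous_at_imp_continuous_on has_vector_derivative_continuous)
  have [measurable]: "c \<in> borel_measurable borel"
    using cont_c by (auto intro: borel_measurable_continuous_onI)
  have eq: "c (real n) * F (real n) - c (- real n) * F (- real n)
      - integral {- real n..real n} (\<lambda>t. of_real (F t) * c' t) = (\<integral>s. indicator {- real n<..real n} s *\<^sub>R c s \<partial>M)" for n
    using stieltjes_parts[OF mono rc bot top dc cc, of "- real n" "real n"]
    unfolding M_def set_lebesgue_integral_def by simp
  have "(\<lambda>n. (\<integral>s. indicator {- real n<..real n} s *\<^sub>R c s \<partial>M)) \<longlonglongrightarrow> (\<integral>s. c s \<partial>M)"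
  proof (rule integral_dominated_convergence[where w="\<lambda>_. B"])
    show "AE x in M. (\<lambda>i. indicator {- real i<..real i} x *\<^sub>R c x) \<longlonglongrightarrow> c x"
    proof (intro AE_I2 tendsto_eventually)
      fix x
      show "\<forall>\<^sub>F i in sequentially. indicator {- real i<..real i} x *\<^sub>R c x = c x"
        using eventually_ge_at_top[of "nat \<lceil>\<bar>x\<bar>\<rceil> + 1"]
      proof eventually_elim
        case (elim i)
        have h1: "\<bar>x\<bar> \<le> real (nat \<lceil>\<bar>x\<bar>\<rceil>)" by (rule real_nat_ceiling_ge)
        have "real (nat \<lceil>\<bar>x\<bar>\<rceil> + 1) \<le> real i" using elim by (simp only: of_nat_le_iff)
        hence h2: "real (nat \<lceil>\<bar>x\<bar>\<rceil>) + 1 \<le> real i" by (simp only: of_nat_add of_nat_1)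
        have "\<bar>x\<bar> < real i" using h1 h2 by linarith
        hence "- real i < x" "x \<le> real i" by arith+
        hence "x \<in> {- real i<..real i}" by auto
        thus ?case by simp
      qed
    qed
    show "\<And>i. AE x in M. norm (indicator {- real i<..real i} x *\<^sub>R c x) \<le> B"
      using cb order_trans[OF norm_ge_zero cb] by (auto simp: indicator_def)
  qed auto
  thus ?thesis using eq unfolding M_def by simp
qed

lemma stieltjes_bound:
  fixes F :: "real \<Rightarrow> real" and c :: "real \<Rightarrow> complex"
  assumes mono: "\<And>x y. x \<le> y \<Longrightarrow> F x \<le> F y" and rc: "\<And>a. continuous (at_right a) F"
    and bot: "(F \<longlongrightarrow> 0) at_bot" and top: "(F \<longlongrightarrow> m) at_top"
    and cb: "\<And>t. norm (c t) \<le> B"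
  shows "norm (LINT s|interval_measure F. c s) \<le> B * m"
proof -
  define M where "M = interval_measure F"
  interpret finite_measure M unfolding M_def by (rule interval_measure_finite(1)[OF mono rc bot top])
  have "norm (LINT s|M. c s) \<le> (LINT s|M. norm (c s))" by (rule integral_norm_bound)
  also have "\<dots> \<le> (LINT s|M. B)"
    using cb order_trans[OF norm_ge_zero cb] by (intro integral_mono') auto
  also have "\<dots> = B * m"
    using interval_measure_finite(2)[OF mono rc bot top] unfolding M_def by simp
  finally show ?thesis unfolding M_def .
qed

lemma polar_alg:
  "(\<Sum>k<4. \<i>^k * (A + \<i>^k * Bc + cnj (\<i>^k) * (B + \<i>^k * D))) / 4 = (B::complex)"
  by (simp add: eval_nat_numeral algebra_simps)

lemma lincomb_pt_bound: "(cmod (a * x + b * y))\<^sup>2 \<le> 2 * (cmod a)\<^sup>2 * (cmod x)\<^sup>2 + 2 * (cmod b)\<^sup>2 * (cmod y)\<^sup>2"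
proof -
  have "cmod (a * x + b * y) \<le> cmod a * cmod x + cmod b * cmod y"
    by (metis norm_mult norm_triangle_ineq)
  hence "(cmod (a * x + b * y))\<^sup>2 \<le> (cmod a * cmod x + cmod b * cmod y)\<^sup>2"
    by (simp add: power_mono)
  also have "\<dots> \<le> 2 * (cmod a * cmod x)\<^sup>2 + 2 * (cmod b * cmod y)\<^sup>2"
    by (rule sq_sum_le)
  also have "\<dots> = 2 * (cmod a)\<^sup>2 * (cmod x)\<^sup>2 + 2 * (cmod b)\<^sup>2 * (cmod y)\<^sup>2"
    by (simp add: power_mult_distrib)
  finally show ?thesis .
qed

lemma vnorm_sq: assumes "sqs x" shows "(vnorm x)\<^sup>2 = (\<Sum>n. (cmod (x n))\<^sup>2)"
proof -
  have "0 \<le> (\<Sum>n. (cmod (x n))\<^sup>2)" using assms unfolding sqs_def by (rule suminf_nonneg) simp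
  thus ?thesis unfolding vnorm_def by (rule real_sqrt_pow2)
qed

lemma vnorm_lincomb_le: assumes x: "sqs x" and y: "sqs y"
  shows "(vnorm (lincomb a x b y))\<^sup>2 \<le> 2 * (cmod a)\<^sup>2 * (vnorm x)\<^sup>2 + 2 * (cmod b)\<^sup>2 * (vnorm y)\<^sup>2"
proof -
  have sx: "summable (\<lambda>n. (cmod (x n))\<^sup>2)" and sy: "summable (\<lambda>n. (cmod (y n))\<^sup>2)"
    using x y by (auto simp: sqs_def)
  have S1: "summable (\<lambda>n. 2 * (cmod a)\<^sup>2 * (cmod (x n))\<^sup>2)" using sx by (rule summable_mult)
  have S2: "summable (\<lambda>n. 2 * (cmod b)\<^sup>2 * (cmod (y n))\<^sup>2)" using sy by (rule summable_mult)
  have "(vnorm (lincomb a x b y))\<^sup>2 = (\<Sum>n. (cmod (a * x n + b * y n))\<^sup>2)"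
    using vnorm_sq[OF sqs_lincomb[OF x y, of a b]] by (simp add: lincomb_def)
  also have "\<dots> \<le> (\<Sum>n. 2 * (cmod a)\<^sup>2 * (cmod (x n))\<^sup>2 + 2 * (cmod b)\<^sup>2 * (cmod (y n))\<^sup>2)"
    using sqs_lincomb[OF x y, of a b] S1 S2 unfolding sqs_def lincomb_def
    by (intro suminf_le lincomb_pt_bound summable_add) auto
  also have "\<dots> = (\<Sum>n. 2 * (cmod a)\<^sup>2 * (cmod (x n))\<^sup>2) + (\<Sum>n. 2 * (cmod b)\<^sup>2 * (cmod (y n))\<^sup>2)"
    using S1 S2 by (rule suminf_add[symmetric])
  also have "\<dots> = 2 * (cmod a)\<^sup>2 * (vnorm x)\<^sup>2 + 2 * (cmod b)\<^sup>2 * (vnorm y)\<^sup>2"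
    using sx sy by (simp add: suminf_mult vnorm_sq[OF x] vnorm_sq[OF y])
  finally show ?thesis .
qed

lemma vnorm_nonneg: assumes "sqs x" shows "0 \<le> vnorm x"
proof -
  have "0 \<le> (\<Sum>n. (cmod (x n))\<^sup>2)" using assms unfolding sqs_def by (rule suminf_nonneg) simp
  thus ?thesis unfolding vnorm_def by simp
qed

lemma vnorm_zero: assumes x: "sqs x" and z: "vnorm x = 0" shows "x = (\<lambda>n. 0)"
proof -
  have "(\<Sum>n. (cmod (x n))\<^sup>2) = 0" using vnorm_sq[OF x] z by simp
  hence "\<forall>n. (cmod (x n))\<^sup>2 = 0"
    using suminf_eq_zero_iff[of "\<lambda>n. (cmod (x n))\<^sup>2"] x unfolding sqs_def by simp
  thus ?thesis by auto
qed

lemma ip_unique: assumes "z1 \<in> l2 I" "z2 \<in> l2 I" and eq: "\<And>y. y \<in> l2 I \<Longrightarrow> ip z1 y = ip z2 y"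
  shows "z1 = z2"
proof -
  let ?d = "lincomb 1 z1 (-1) z2"
  have s1: "sqs z1" "sqs z2" using assms l2_sqs by auto
  have dl: "?d \<in> l2 I" using assms by (intro l2_lincomb)
  have sd: "sqs ?d" using dl l2_sqs by blast
  have "ip ?d ?d = ip z1 ?d - ip z2 ?d"
    using ip_left[OF s1 sd, of 1 "-1"] by simp
  also have "\<dots> = 0" using eq[OF dl] by simp
  finally have "vnorm ?d = 0" using ip_self[OF sd] by simp
  hence "?d = (\<lambda>n. 0)" using vnorm_zero[OF sd] by simp
  thus ?thesis by (auto simp: lincomb_def fun_eq_iff)
qed

lemma riesz_l2:
  fixes L :: "vec \<Rightarrow> complex" and C :: real
  assumes lin: "\<And>y1 y2 a b. y1 \<in> l2 I \<Longrightarrow> y2 \<in> l2 I \<Longrightarrow> L (lincomb a y1 b y2) = cnj a * L y1 + cnj b * L y2"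
    and bnd: "\<And>y. y \<in> l2 I \<Longrightarrow> cmod (L y) \<le> C * vnorm y"
  shows "\<exists>z\<in>l2 I. \<forall>y\<in>l2 I. ip z y = L y"
proof -
  define \<delta> where "\<delta> n = (\<lambda>m::nat. if m = n then (1::complex) else 0)" for n :: nat
  define z where "z n = (if n \<in> I then L (\<delta> n) else 0)" for n
  define tr where "tr S w = (\<lambda>m::nat. if m \<in> S then w m else (0::complex))" for S :: "nat set" and w :: vec
  have tr_l2: "tr S w \<in> l2 I" if "finite S" "S \<subseteq> I" for S w
    unfolding l2_def using that by (auto simp: tr_def intro: summable_finite[of S])
  have zl2: "(\<lambda>m. 0::complex) \<in> l2 I" unfolding l2_def by simp
  have zero: "L (\<lambda>m. 0) = 0"
    using lin[OF zl2 zl2, of 0 0] by (simp add: lincomb_def)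
  have dl2: "\<delta> n \<in> l2 I" if "n \<in> I" for n
    using tr_l2[of "{n}" "\<lambda>_. 1"] that by (simp add: tr_def \<delta>_def[abs_def])
  have fin: "L (tr S w) = (\<Sum>n\<in>S. cnj (w n) * z n)" if "finite S" "S \<subseteq> I" for S w
    using that
  proof (induction S rule: finite_induct)
    case empty
    thus ?case using zero by (simp add: tr_def)
  next
    case (insert n S)
    have eq: "tr (insert n S) w = lincomb 1 (tr S w) (w n) (\<delta> n)"
      using insert.hyps by (auto simp: tr_def lincomb_def \<delta>_def fun_eq_iff)
    have "L (tr (insert n S) w) = L (tr S w) + cnj (w n) * L (\<delta> n)"
      unfolding eq using insert.prems insert.hyps by (subst lin) (auto intro!: tr_l2 dl2)
    thus ?case using insert by (simp add: z_def)
  qed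
  have vn_tr: "(vnorm (tr S w))\<^sup>2 = (\<Sum>n\<in>S. (cmod (w n))\<^sup>2)" if "finite S" for S w
  proof -
    have "(\<Sum>n. (cmod (tr S w n))\<^sup>2) = (\<Sum>n\<in>S. (cmod (tr S w n))\<^sup>2)"
      using that by (intro suminf_finite) (auto simp: tr_def)
    moreover have "sqs (tr S w)" unfolding sqs_def using that
      by (intro summable_finite[of S]) (auto simp: tr_def)
    ultimately show ?thesis using vnorm_sq by (simp add: tr_def)
  qed
  have partial: "(\<Sum>n\<in>S. (cmod (z n))\<^sup>2) \<le> C\<^sup>2" if S: "finite S" "S \<subseteq> I" for S
  proof -
    define A where "A = (\<Sum>n\<in>S. (cmod (z n))\<^sup>2)"
    have A0: "0 \<le> A" unfolding A_def by (simp add: sum_nonneg)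
    have "L (tr S z) = (\<Sum>n\<in>S. cnj (z n) * z n)" using fin[OF S] .
    also have "\<dots> = of_real A" unfolding A_def
      by (simp add: complex_mult_cnj cmod_power2 mult.commute del: of_real_power)
    finally have "A \<le> C * vnorm (tr S z)" using bnd[OF tr_l2[OF S, of z]] A0 by simp
    also have "vnorm (tr S z) = sqrt A"
      using vn_tr[OF S(1), of z] vnorm_nonneg[OF l2_sqs[OF tr_l2[OF S]]] unfolding A_def
      by (metis real_sqrt_unique)
    finally have AC: "A \<le> C * sqrt A" .
    show ?thesis
    proof (cases "A = 0")
      case True thus ?thesis by (simp add: A_def)
    next
      case False
      hence pos: "0 < sqrt A" using A0 by simp
      have "sqrt A * sqrt A \<le> C * sqrt A" using AC A0 by simp
      hence "sqrt A \<le> C" by (rule mult_right_le_imp_le[OF _ pos])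
      hence "(sqrt A)\<^sup>2 \<le> C\<^sup>2" using pos by (intro power_mono) auto
      thus ?thesis using A0 by (simp add: A_def)
    qed
  qed
  have zI: "z n = 0" if "n \<notin> I" for n using that by (simp add: z_def)
  have zl: "z \<in> l2 I"
  proof -
    have "(\<Sum>i<N. (cmod (z i))\<^sup>2) \<le> C\<^sup>2" for N
    proof -
      have "(\<Sum>i<N. (cmod (z i))\<^sup>2) = (\<Sum>i\<in>{..<N} \<inter> I. (cmod (z i))\<^sup>2)"
        by (rule sum.mono_neutral_right) (auto simp: zI)
      also have "\<dots> \<le> C\<^sup>2" by (intro partial) auto
      finally show ?thesis .
    qed
    hence "summable (\<lambda>n. (cmod (z n))\<^sup>2)"
      by (intro summableI_nonneg_bounded[where x="C\<^sup>2"]) auto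
    thus ?thesis unfolding l2_def using zI by auto
  qed
  have main: "ip z y = L y" if y: "y \<in> l2 I" for y
  proof -
    have yI: "y n = 0" if "n \<notin> I" for n using y that by (simp add: l2_def)
    have sy: "sqs y" using y l2_sqs by blast
    have sz: "sqs z" using zl l2_sqs by blast
    define yN where "yN N = tr ({..<N} \<inter> I) y" for N :: nat
    define rN where "rN N = (\<lambda>n::nat. if n < N then 0 else y n)" for N :: nat
    have yNl: "yN N \<in> l2 I" for N unfolding yN_def by (intro tr_l2) auto
    have l1: "L (yN N) = (\<Sum>n<N. z n * cnj (y n))" for N
    proof -
      have "L (yN N) = (\<Sum>n\<in>{..<N} \<inter> I. cnj (y n) * z n)" unfolding yN_def by (intro fin) auto
      also have "\<dots> = (\<Sum>n<N. cnj (y n) * z n)"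
        by (rule sum.mono_neutral_left) (auto simp: zI)
      finally show ?thesis by (simp add: mult.commute)
    qed
    have lim1: "(\<lambda>N. L (yN N)) \<longlonglongrightarrow> ip z y"
      unfolding l1 ip_def using ip_summable'[OF sz sy] by (rule summable_LIMSEQ)
    have rNeq: "rN N = lincomb 1 y (-1) (yN N)" for N
      by (auto simp: rN_def lincomb_def yN_def tr_def fun_eq_iff yI)
    have rl: "L (rN N) = L y - L (yN N)" for N
      unfolding rNeq using lin[OF y yNl] by simp
    have f: "summable (\<lambda>n. (cmod (y n))\<^sup>2)" using sy by (simp add: sqs_def)
    have vr: "vnorm (rN N) = sqrt ((\<Sum>n. (cmod (y n))\<^sup>2) - (\<Sum>n<N. (cmod (y n))\<^sup>2))" for N
    proof -
      have e1: "(\<lambda>n. (cmod (rN N n))\<^sup>2) = (\<lambda>n. (cmod (y n))\<^sup>2 - (if n < N then (cmod (y n))\<^sup>2 else 0))"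
        by (auto simp: rN_def fun_eq_iff)
      have s2: "summable (\<lambda>n. if n < N then (cmod (y n))\<^sup>2 else 0)"
        by (rule summable_finite[of "{..<N}"]) auto
      have e3: "(\<Sum>n. if n < N then (cmod (y n))\<^sup>2 else 0) = (\<Sum>n<N. (cmod (y n))\<^sup>2)"
        by (subst suminf_finite[of "{..<N}"]) auto
      have "(\<Sum>n. (cmod (y n))\<^sup>2 - (if n < N then (cmod (y n))\<^sup>2 else 0))
          = (\<Sum>n. (cmod (y n))\<^sup>2) - (\<Sum>n. if n < N then (cmod (y n))\<^sup>2 else 0)"
        by (rule suminf_diff[OF f s2, symmetric])
      thus ?thesis unfolding vnorm_def e1 e3 by simp
    qed
    have "(\<lambda>N. sqrt ((\<Sum>n. (cmod (y n))\<^sup>2) - (\<Sum>n<N. (cmod (y n))\<^sup>2))) \<longlonglongrightarrow> sqrt ((\<Sum>n. (cmod (y n))\<^sup>2) - (\<Sum>n. (cmod (y n))\<^sup>2))"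
      by (intro tendsto_intros summable_LIMSEQ f)
    hence vr0: "(\<lambda>N. vnorm (rN N)) \<longlonglongrightarrow> 0" unfolding vr by simp
    have "(\<lambda>N. C * vnorm (rN N)) \<longlonglongrightarrow> C * 0" by (intro tendsto_intros vr0)
    hence g0: "(\<lambda>N. C * vnorm (rN N)) \<longlonglongrightarrow> 0" by simp
    have rNl: "rN N \<in> l2 I" for N unfolding rNeq by (rule l2_lincomb[OF y yNl])
    have "\<forall>N. norm (L (rN N)) \<le> C * vnorm (rN N)" by (intro allI bnd rNl)
    hence "(\<lambda>N. L (rN N)) \<longlonglongrightarrow> 0"
      by (intro Lim_null_comparison[OF always_eventually g0])
    hence "(\<lambda>N. L y - L (rN N)) \<longlonglongrightarrow> L y - 0" by (intro tendsto_intros)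
    hence "(\<lambda>N. L (yN N)) \<longlonglongrightarrow> L y" unfolding rl by simp
    with lim1 show ?thesis by (rule LIMSEQ_unique)
  qed
  show ?thesis using zl main by blast
qed

lemma hk_mult: "f integrable_on S \<Longrightarrow> integral S (\<lambda>x. (k::complex) * f x) = k * integral S f"
  by (rule integral_unique, rule has_integral_mult_right, rule integrable_integral)

locale sfc = sfam +
  fixes c c' :: "real \<Rightarrow> complex" and B :: real
  assumes dc: "\<And>t. (c has_vector_derivative c' t) (at t)"
    and cc: "continuous_on UNIV c'"
    and cb: "\<And>t. norm (c t) \<le> B"
begin

lemma B_nonneg: "0 \<le> B"
  using order_trans[OF norm_ge_zero cb] .

definition Psi :: "nat \<Rightarrow> (real \<Rightarrow> complex) \<Rightarrow> complex" where
  "Psi n F = c (real n) * F (real n) - c (- real n) * F (- real n)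
     - integral {- real n..real n} (\<lambda>t. F t * c' t)"

lemma spec_meas_G: "spec_meas E x = interval_measure (G x)"
  unfolding spec_meas_def G_def[abs_def] ..

lemma polar: assumes x: "x \<in> l2 I" and y: "y \<in> l2 I"
  shows "ip (E t x) y = (\<Sum>k<4. \<i>^k * of_real (G (lincomb 1 x (\<i>^k) y) t)) / 4"
proof -
  define p where "p = E t x"
  define q where "q = E t y"
  have sp: "sqs p" and sq: "sqs q" unfolding p_def q_def using x y by (auto intro: E_sqs)
  have k: "of_real (G (lincomb 1 x (\<i>^k) y) t) = \<i>^k * (ip p p + \<i>^k * ip q p + cnj (\<i>^k) * (ip p q + \<i>^k * ip q q)) * cnj (\<i>^k)" for k :: nat
  proof -
    have w: "E t (lincomb 1 x (\<i>^k) y) = lincomb 1 p (\<i>^k) q"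
      unfolding p_def q_def by (rule E_lin[OF x y])
    have sw: "sqs (lincomb 1 p (\<i>^k) q)" by (rule sqs_lincomb[OF sp sq])
    have "of_real (G (lincomb 1 x (\<i>^k) y) t) = ip (lincomb 1 p (\<i>^k) q) (lincomb 1 p (\<i>^k) q)"
      unfolding G_def w using ip_self[OF sw] by simp
    also have "\<dots> = cnj 1 * ip (lincomb 1 p (\<i>^k) q) p + cnj (\<i>^k) * ip (lincomb 1 p (\<i>^k) q) q"
      by (rule ip_right[OF sp sq sw])
    also have "\<dots> = (ip p p + \<i>^k * ip q p) + cnj (\<i>^k) * (ip p q + \<i>^k * ip q q)"
      using ip_left[OF sp sq sp, of 1 "\<i>^k"] ip_left[OF sp sq sq, of 1 "\<i>^k"] by simp
    also have "\<dots> = \<i>^k * ((ip p p + \<i>^k * ip q p) + cnj (\<i>^k) * (ip p q + \<i>^k * ip q q)) * cnj (\<i>^k)"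
      by (simp add: mult.commute mult.left_commute power_mult_distrib[symmetric])
    finally show ?thesis by simp
  qed
  have "(\<Sum>k<4. \<i>^k * of_real (G (lincomb 1 x (\<i>^k) y) t)) / 4
      = (\<Sum>k<4. \<i>^k * (ip p p + \<i>^k * ip q p + cnj (\<i>^k) * (ip p q + \<i>^k * ip q q))) / 4"
    unfolding k by (simp add: eval_nat_numeral algebra_simps)
  also have "\<dots> = ip p q" by (rule polar_alg)
  also have "ip p q = ip (E t x) y" unfolding p_def q_def by (rule E_ipE[OF x y])
  finally show ?thesis by simp
qed

lemma G_int: "u \<in> l2 I \<Longrightarrow> (\<lambda>t. of_real (G u t) * c' t) integrable_on {a..b}"
  by (rule mono_times_cont_integrable[OF G_mono cc])

lemma Ff_expand: assumes x: "x \<in> l2 I" and y: "y \<in> l2 I"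
  shows "(\<lambda>t. ip (E t x) y) = (\<lambda>t. \<Sum>k<4. (\<i>^k / 4) * of_real (G (lincomb 1 x (\<i>^k) y) t))"
proof
  fix t
  show "ip (E t x) y = (\<Sum>k<4. (\<i>^k / 4) * of_real (G (lincomb 1 x (\<i>^k) y) t))"
    unfolding polar[OF x y] by (simp add: sum_divide_distrib)
qed

lemma Ff_int: assumes x: "x \<in> l2 I" and y: "y \<in> l2 I"
  shows "(\<lambda>t. ip (E t x) y * c' t) integrable_on {a..b}"
proof -
  have eq: "(\<lambda>t. ip (E t x) y * c' t) = (\<lambda>t. \<Sum>k<4. (\<i>^k / 4) * (of_real (G (lincomb 1 x (\<i>^k) y) t) * c' t))"
  proof
    fix t
    have "ip (E t x) y * c' t = (\<Sum>k<4. (\<i>^k / 4) * of_real (G (lincomb 1 x (\<i>^k) y) t)) * c' t"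
      using fun_cong[OF Ff_expand[OF x y], of t] by simp
    also have "\<dots> = (\<Sum>k<4. (\<i>^k / 4) * (of_real (G (lincomb 1 x (\<i>^k) y) t) * c' t))"
      by (simp add: sum_distrib_right mult.assoc)
    finally show "ip (E t x) y * c' t = (\<Sum>k<4. (\<i>^k / 4) * (of_real (G (lincomb 1 x (\<i>^k) y) t) * c' t))" .
  qed
  show ?thesis unfolding eq
    by (intro integrable_sum integrable_on_mult_right G_int l2_lincomb x y) simp
qed

lemma Psi_sum: assumes "finite K" and int: "\<And>k. k \<in> K \<Longrightarrow> (\<lambda>t. F k t * c' t) integrable_on {- real n..real n}"
  shows "Psi n (\<lambda>t. \<Sum>k\<in>K. a k * F k t) = (\<Sum>k\<in>K. a k * Psi n (F k))"
proof -
  have "integral {- real n..real n} (\<lambda>t. (\<Sum>k\<in>K. a k * F k t) * c' t)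
      = integral {- real n..real n} (\<lambda>t. \<Sum>k\<in>K. a k * (F k t * c' t))"
    by (simp add: sum_distrib_right mult.assoc)
  also have "\<dots> = (\<Sum>k\<in>K. integral {- real n..real n} (\<lambda>t. a k * (F k t * c' t)))"
    by (rule Henstock_Kurzweil_Integration.integral_sum[OF assms(1)]) (intro integrable_on_mult_right int)
  also have "\<dots> = (\<Sum>k\<in>K. a k * integral {- real n..real n} (\<lambda>t. F k t * c' t))"
    by (intro sum.cong refl hk_mult int)
  finally have I: "integral {- real n..real n} (\<lambda>t. (\<Sum>k\<in>K. a k * F k t) * c' t)
      = (\<Sum>k\<in>K. a k * integral {- real n..real n} (\<lambda>t. F k t * c' t))" .
  show ?thesis unfolding Psi_def I
    by (simp add: sum_distrib_left sum_subtractf right_diff_distrib mult.left_commute)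
qed

lemma Psi_lin2: assumes i1: "(\<lambda>t. F1 t * c' t) integrable_on {- real n..real n}"
  and i2: "(\<lambda>t. F2 t * c' t) integrable_on {- real n..real n}"
  shows "Psi n (\<lambda>t. \<alpha> * F1 t + \<beta> * F2 t) = \<alpha> * Psi n F1 + \<beta> * Psi n F2"
proof -
  have "integral {- real n..real n} (\<lambda>t. (\<alpha> * F1 t + \<beta> * F2 t) * c' t)
      = integral {- real n..real n} (\<lambda>t. \<alpha> * (F1 t * c' t) + \<beta> * (F2 t * c' t))"
    by (simp add: algebra_simps)
  also have "\<dots> = \<alpha> * integral {- real n..real n} (\<lambda>t. F1 t * c' t) + \<beta> * integral {- real n..real n} (\<lambda>t. F2 t * c' t)"
    by (subst integral_add) (auto intro: integrable_on_mult_right i1 i2 simp: hk_mult[OF i1] hk_mult[OF i2])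
  finally show ?thesis unfolding Psi_def by (simp add: algebra_simps)
qed

lemma G_lim: assumes u: "u \<in> l2 I"
  shows "(\<lambda>n. Psi n (\<lambda>t. of_real (G u t))) \<longlonglongrightarrow> (LINT t|spec_meas E u. c t)"
  unfolding spec_meas_G Psi_def
  using stieltjes_lim[OF G_mono[OF u] G_rc[OF u] G_bot[OF u] G_top[OF u] dc cc cb] by simp

lemma K: assumes x: "x \<in> l2 I" and y: "y \<in> l2 I"
  shows "(\<lambda>n. Psi n (\<lambda>t. ip (E t x) y)) \<longlonglongrightarrow> spec_int E c x y"
proof -
  have ul: "lincomb 1 x (\<i>^k) y \<in> l2 I" for k :: nat using x y by (rule l2_lincomb)
  have "(\<lambda>n. \<Sum>k<4. (\<i>^k / 4) * Psi n (\<lambda>t. of_real (G (lincomb 1 x (\<i>^k) y) t)))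
      \<longlonglongrightarrow> (\<Sum>k<4. (\<i>^k / 4) * (LINT t|spec_meas E (lincomb 1 x (\<i>^k) y). c t))"
    by (intro tendsto_sum tendsto_mult tendsto_const G_lim ul)
  moreover have "(\<Sum>k<4. (\<i>^k / 4) * (LINT t|spec_meas E (lincomb 1 x (\<i>^k) y). c t)) = spec_int E c x y"
    unfolding spec_int_def by (simp add: sum_divide_distrib)
  moreover have "(\<Sum>k<4. (\<i>^k / 4) * Psi n (\<lambda>t. of_real (G (lincomb 1 x (\<i>^k) y) t))) = Psi n (\<lambda>t. ip (E t x) y)" for n
    unfolding Ff_expand[OF x y]
    by (rule Psi_sum[symmetric]) (auto intro: G_int ul)
  ultimately show ?thesis by simp
qed

lemma spec_int_lin: assumes x: "x \<in> l2 I" and y1: "y1 \<in> l2 I" and y2: "y2 \<in> l2 I"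
  shows "spec_int E c x (lincomb a y1 b y2) = cnj a * spec_int E c x y1 + cnj b * spec_int E c x y2"
proof -
  have yl: "lincomb a y1 b y2 \<in> l2 I" using y1 y2 by (rule l2_lincomb)
  have eq: "(\<lambda>t. ip (E t x) (lincomb a y1 b y2)) = (\<lambda>t. cnj a * ip (E t x) y1 + cnj b * ip (E t x) y2)"
    using ip_right[OF l2_sqs[OF y1] l2_sqs[OF y2] E_sqs[OF x]] by simp
  have "Psi n (\<lambda>t. ip (E t x) (lincomb a y1 b y2)) = cnj a * Psi n (\<lambda>t. ip (E t x) y1) + cnj b * Psi n (\<lambda>t. ip (E t x) y2)" for n
    unfolding eq by (rule Psi_lin2) (intro Ff_int x y1 y2)+
  hence "(\<lambda>n. cnj a * Psi n (\<lambda>t. ip (E t x) y1) + cnj b * Psi n (\<lambda>t. ip (E t x) y2)) \<longlonglongrightarrow> spec_int E c x (lincomb a y1 b y2)"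
    using K[OF x yl] by simp
  moreover have "(\<lambda>n. cnj a * Psi n (\<lambda>t. ip (E t x) y1) + cnj b * Psi n (\<lambda>t. ip (E t x) y2)) \<longlonglongrightarrow> cnj a * spec_int E c x y1 + cnj b * spec_int E c x y2"
    by (intro tendsto_intros K x y1 y2)
  ultimately show ?thesis by (rule LIMSEQ_unique)
qed

lemma spec_int_bound: assumes x: "x \<in> l2 I" and y: "y \<in> l2 I"
  shows "cmod (spec_int E c x y) \<le> B * (2 * (vnorm x)\<^sup>2 + 2 * (vnorm y)\<^sup>2)"
proof -
  define W where "W = B * (2 * (vnorm x)\<^sup>2 + 2 * (vnorm y)\<^sup>2)"
  have Lk: "cmod (LINT t|spec_meas E (lincomb 1 x (\<i>^k) y). c t) \<le> W" for k :: nat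
  proof -
    have ul: "lincomb 1 x (\<i>^k) y \<in> l2 I" using x y by (rule l2_lincomb)
    have "cmod (LINT t|spec_meas E (lincomb 1 x (\<i>^k) y). c t) \<le> B * (vnorm (lincomb 1 x (\<i>^k) y))\<^sup>2"
      unfolding spec_meas_G by (rule stieltjes_bound[OF G_mono[OF ul] G_rc[OF ul] G_bot[OF ul] G_top[OF ul] cb])
    also have "\<dots> \<le> W" unfolding W_def
      using vnorm_lincomb_le[OF l2_sqs[OF x] l2_sqs[OF y], of 1 "\<i>^k"] B_nonneg
      by (intro mult_left_mono) (auto simp: norm_power)
    finally show ?thesis .
  qed
  have "cmod (spec_int E c x y) = cmod (\<Sum>k<4. \<i> ^ k * (LINT t|spec_meas E (lincomb 1 x (\<i>^k) y). c t)) / 4"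
    unfolding spec_int_def by (simp add: norm_divide)
  also have "\<dots> \<le> (\<Sum>k<4::nat. cmod (\<i> ^ k * (LINT t|spec_meas E (lincomb 1 x (\<i>^k) y). c t))) / 4"
    by (intro divide_right_mono norm_sum) simp
  also have "\<dots> \<le> (\<Sum>k<4::nat. W) / 4"
    by (intro divide_right_mono sum_mono) (auto simp: norm_mult norm_power Lk)
  also have "\<dots> = W" by simp
  finally show ?thesis unfolding W_def .
qed

lemma spec_int_bound_lin: assumes x: "x \<in> l2 I" and y: "y \<in> l2 I"
  shows "cmod (spec_int E c x y) \<le> (B * (2 * (vnorm x)\<^sup>2 + 2)) * vnorm y"
proof (cases "vnorm y = 0")
  case True
  hence y0: "y = (\<lambda>n. 0)" using vnorm_zero[OF l2_sqs[OF y]] by simp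
  have "y = lincomb 0 y 0 y" by (simp add: y0 lincomb_def)
  hence "spec_int E c x y = cnj 0 * spec_int E c x y + cnj 0 * spec_int E c x y"
    using spec_int_lin[OF x y y, of 0 0] by simp
  thus ?thesis using True by simp
next
  case False
  define r where "r = vnorm y"
  have rpos: "0 < r" using False vnorm_nonneg[OF l2_sqs[OF y]] unfolding r_def by simp
  define y' where "y' = lincomb (of_real (1/r)) y 0 y"
  have y'l: "y' \<in> l2 I" unfolding y'_def using y y by (rule l2_lincomb)
  have sy: "sqs y" using y l2_sqs by blast
  have sy': "sqs y'" using y'l l2_sqs by blast
  have "ip y' y' = of_real (1/r) * cnj (of_real (1/r)) * ip y y"
    unfolding y'_def using ip_left[OF sy sy sqs_lincomb[OF sy sy]] ip_right[OF sy sy sy] by simp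
  also have "\<dots> = 1" using ip_self[OF sy] rpos unfolding r_def by (simp add: power2_eq_square)
  finally have "(vnorm y')\<^sup>2 = 1" using ip_self[OF sy'] by (metis of_real_1 of_real_eq_iff)
  hence n1: "vnorm y' = 1" using vnorm_nonneg[OF sy'] by (simp add: power2_eq_1_iff)
  have yeq: "y = lincomb (of_real r) y' 0 y'"
    unfolding y'_def lincomb_def using rpos by (auto simp: fun_eq_iff)
  have "spec_int E c x y = cnj (of_real r) * spec_int E c x y' + cnj 0 * spec_int E c x y'"
    by (subst yeq) (rule spec_int_lin[OF x y'l y'l])
  hence "cmod (spec_int E c x y) = r * cmod (spec_int E c x y')" using rpos by (simp add: norm_mult)
  also have "\<dots> \<le> r * (B * (2 * (vnorm x)\<^sup>2 + 2 * (vnorm y')\<^sup>2))"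
    using rpos by (intro mult_left_mono spec_int_bound x y'l) auto
  finally show ?thesis using n1 unfolding r_def by (simp add: mult.commute)
qed

end

lemma C0_props: assumes "C0_infty chi"
  shows "\<exists>c' B. (\<forall>t. (chi has_vector_derivative c' t) (at t)) \<and> continuous_on UNIV c' \<and> (\<forall>t. norm (chi t) \<le> B)"
proof -
  obtain d :: "nat \<Rightarrow> real \<Rightarrow> complex" where d0: "d 0 = chi"
    and dd: "\<And>k x. (d k has_vector_derivative d (Suc k) x) (at x)"
    and dl: "\<And>k. (d k \<longlongrightarrow> 0) at_infinity"
    using assms unfolding C0_infty_def by blast
  have der: "(chi has_vector_derivative d 1 t) (at t)" for t using dd[of 0 t] d0 by simp
  have cc: "continuous_on UNIV (d 1)"
    by (rule continuous_at_imp_continuous_on) (metis One_nat_def dd has_vector_derivative_continuous)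
  have cchi: "continuous_on UNIV chi"
    by (rule continuous_at_imp_continuous_on) (metis der has_vector_derivative_continuous)
  have "eventually (\<lambda>t. dist (chi t) 0 < 1) at_infinity"
    using dl[of 0] d0 by (auto dest: tendstoD[where e=1])
  then obtain R where R: "\<And>t. R \<le> norm t \<Longrightarrow> dist (chi t) 0 < 1"
    unfolding eventually_at_infinity by blast
  obtain K where K: "\<And>t. t \<in> cball 0 R \<Longrightarrow> norm (chi t) \<le> K"
    using compact_imp_bounded[OF compact_continuous_image[OF continuous_on_subset[OF cchi] compact_cball]]
    unfolding bounded_iff by blast
  have "norm (chi t) \<le> max 1 K" for t
  proof (cases "R \<le> norm t")
    case True thus ?thesis using R[OF True] by simp
  next
    case False thus ?thesis using K[of t] by (simp add: dist_norm)
  qed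
  thus ?thesis using der cc by blast
qed

context sfc
begin

lemma fcalc_char: assumes f: "f \<in> l2 I"
  shows "fcalc I E c f \<in> l2 I" and "\<And>y. y \<in> l2 I \<Longrightarrow> ip (fcalc I E c f) y = spec_int E c f y"
proof -
  obtain z where z: "z \<in> l2 I" "\<And>y. y \<in> l2 I \<Longrightarrow> ip z y = spec_int E c f y"
    using riesz_l2[of I "spec_int E c f" "B * (2 * (vnorm f)\<^sup>2 + 2)"] spec_int_lin[OF f] spec_int_bound_lin[OF f]
    by blast
  have "fcalc I E c f = z"
    unfolding fcalc_def
  proof (rule the_equality)
    show "z \<in> l2 I \<and> (\<forall>y\<in>l2 I. ip z y = spec_int E c f y)" using z by blast
    fix z' assume z': "z' \<in> l2 I \<and> (\<forall>y\<in>l2 I. ip z' y = spec_int E c f y)"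
    show "z' = z" using z' z by (intro ip_unique[of z' I z]) auto
  qed
  thus "fcalc I E c f \<in> l2 I" "\<And>y. y \<in> l2 I \<Longrightarrow> ip (fcalc I E c f) y = spec_int E c f y"
    using z by auto
qed

lemma main_deriv:
  assumes f: "f \<in> l2 I" and g: "g \<in> l2 I"
    and dF: "((\<lambda>\<mu>. ip (E \<mu> f) g) has_vector_derivative dF) (at lam)"
  shows "((\<lambda>\<mu>. ip (E \<mu> (fcalc I E c f)) g) has_vector_derivative (c lam * dF)) (at lam)"
proof -
  define z where "z = fcalc I E c f"
  have zl: "z \<in> l2 I" and zp: "\<And>y. y \<in> l2 I \<Longrightarrow> ip z y = spec_int E c f y"
    using fcalc_char[OF f] unfolding z_def by auto
  define F where "F t = ip (E t f) g" for t
  define \<Phi> where "\<Phi> \<mu> = ip (E \<mu> z) g" for \<mu>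
  define A where "A = lam - 1"
  define Bb where "Bb = lam + 1"
  define U where "U = {A<..<Bb}"
  define I1 where "I1 \<mu> = integral {A..\<mu>} (\<lambda>t. F t * c' t)" for \<mu>
  define s where "s n = c (- real n) * F (- real n) + integral {- real n..A} (\<lambda>t. F t * c' t)" for n
  have Fint: "(\<lambda>t. F t * c' t) integrable_on {a..b}" for a b
    unfolding F_def by (rule Ff_int[OF f g])
  have pw: "ip (E t f) (E \<mu> g) = F (min \<mu> t)" for t \<mu>
    unfolding F_def using E_sym[OF E_l2[OF f] g, of \<mu> t] E_comp[OF f, of \<mu> t] by simp
  have Phi_lim: "(\<lambda>n. Psi n (\<lambda>t. F (min \<mu> t))) \<longlonglongrightarrow> \<Phi> \<mu>" for \<mu>
  proof -
    have "\<Phi> \<mu> = spec_int E c f (E \<mu> g)"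
      unfolding \<Phi>_def using E_sym[OF zl g] zp[OF E_l2[OF g]] by simp
    moreover have "(\<lambda>t. ip (E t f) (E \<mu> g)) = (\<lambda>t. F (min \<mu> t))"
    proof
      fix t
      show "ip (E t f) (E \<mu> g) = F (min \<mu> t)"
        unfolding F_def using E_sym[OF E_l2[OF f] g, of \<mu> t] E_comp[OF f, of \<mu> t] by simp
    qed
    ultimately show ?thesis using K[OF f E_l2[OF g, of \<mu>]] by simp
  qed
  have Psi_eq: "Psi n (\<lambda>t. F (min \<mu> t)) = c \<mu> * F \<mu> - s n - I1 \<mu>"
    if mu: "\<mu> \<in> U" and n: "\<bar>lam\<bar> + 2 \<le> real n" for n \<mu>
  proof -
    have mu1: "A < \<mu>" "\<mu> < Bb" using mu unfolding U_def by auto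
    have n1: "- real n \<le> A" "Bb \<le> real n" using n unfolding A_def Bb_def by linarith+
    let ?h = "\<lambda>t. F (min \<mu> t) * c' t"
    have hint: "?h integrable_on {- real n..real n}"
    proof -
      have "(\<lambda>t. ip (E t f) (E \<mu> g) * c' t) integrable_on {- real n..real n}"
        by (rule Ff_int[OF f E_l2[OF g]])
      thus ?thesis by (simp add: pw)
    qed
    have "integral {- real n..real n} ?h = integral {- real n..\<mu>} ?h + integral {\<mu>..real n} ?h"
      using n1 mu1 by (intro Henstock_Kurzweil_Integration.integral_combine[symmetric] hint) auto
    also have "integral {- real n..\<mu>} ?h = integral {- real n..\<mu>} (\<lambda>t. F t * c' t)"
      by (rule integral_cong) (auto simp: min_def)
    also have "\<dots> = integral {- real n..A} (\<lambda>t. F t * c' t) + I1 \<mu>"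
      unfolding I1_def using n1 mu1 by (intro Henstock_Kurzweil_Integration.integral_combine[symmetric] Fint) auto
    also have "integral {\<mu>..real n} ?h = integral {\<mu>..real n} (\<lambda>t. F \<mu> * c' t)"
      by (rule integral_cong) (auto simp: min_def)
    also have "\<dots> = F \<mu> * (c (real n) - c \<mu>)"
    proof -
      have "(c' has_integral (c (real n) - c \<mu>)) {\<mu>..real n}"
        using n1 mu1 by (intro fundamental_theorem_of_calculus) (auto intro: has_vector_derivative_at_within dc)
      thus ?thesis by (subst hk_mult) (auto dest: integral_unique)
    qed
    finally have I: "integral {- real n..real n} ?h = integral {- real n..A} (\<lambda>t. F t * c' t) + I1 \<mu> + F \<mu> * (c (real n) - c \<mu>)" .
    have m1: "min \<mu> (real n) = \<mu>" "min \<mu> (- real n) = - real n" using n1 mu1 by auto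
    show ?thesis unfolding Psi_def I m1 s_def by (simp add: algebra_simps)
  qed
  have const: "c \<mu> * F \<mu> - I1 \<mu> - \<Phi> \<mu> = c lam * F lam - I1 lam - \<Phi> lam" if mu: "\<mu> \<in> U" for \<mu>
  proof -
    have lamU: "lam \<in> U" unfolding U_def A_def Bb_def by auto
    have slim: "s \<longlonglongrightarrow> c \<nu> * F \<nu> - I1 \<nu> - \<Phi> \<nu>" if nu: "\<nu> \<in> U" for \<nu>
    proof -
      have "(\<lambda>n. c \<nu> * F \<nu> - I1 \<nu> - Psi n (\<lambda>t. F (min \<nu> t))) \<longlonglongrightarrow> c \<nu> * F \<nu> - I1 \<nu> - \<Phi> \<nu>"
        by (intro tendsto_intros Phi_lim)
      moreover have "eventually (\<lambda>n. c \<nu> * F \<nu> - I1 \<nu> - Psi n (\<lambda>t. F (min \<nu> t)) = s n) sequentially"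
        using eventually_ge_at_top[of "nat \<lceil>\<bar>lam\<bar> + 2\<rceil>"]
      proof eventually_elim
        case (elim n)
        have "\<bar>lam\<bar> + 2 \<le> real (nat \<lceil>\<bar>lam\<bar> + 2\<rceil>)" by (rule real_nat_ceiling_ge)
        also have "\<dots> \<le> real n" using elim by (simp only: of_nat_le_iff)
        finally have "\<bar>lam\<bar> + 2 \<le> real n" .
        thus ?case using Psi_eq[OF nu] by simp
      qed
      ultimately show ?thesis by (rule Lim_transform_eventually)
    qed
    show ?thesis using LIMSEQ_unique[OF slim[OF mu] slim[OF lamU]] .
  qed
  define K0 where "K0 = c lam * F lam - I1 lam - \<Phi> lam"
  have Phi_eq: "\<Phi> \<mu> = c \<mu> * F \<mu> - I1 \<mu> - K0" if "\<mu> \<in> U" for \<mu>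
    using const[OF that] unfolding K0_def by (simp add: algebra_simps)
  have lamI: "A < lam" "lam < Bb" unfolding A_def Bb_def by auto
  have hF: "(F has_vector_derivative dF) (at lam)" using dF unfolding F_def[abs_def] .
  have hc: "(c has_vector_derivative c' lam) (at lam)" by (rule dc)
  have contF: "isCont F lam" by (rule has_vector_derivative_continuous[OF hF])
  have contc': "isCont c' lam" using cc by (simp add: continuous_on_eq_continuous_at)
  have hI: "(I1 has_vector_derivative (F lam * c' lam)) (at lam)"
  proof -
    have "((\<lambda>u. integral {A..u} (\<lambda>t. F t * c' t)) has_vector_derivative (F lam * c' lam)) (at lam within ({A..Bb} - {}))"
    proof (rule integral_has_vector_derivative_continuous_at)
      show "(\<lambda>t. F t * c' t) integrable_on {A..Bb}" by (rule Fint)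
      show "lam \<in> {A..Bb} - {}" using lamI by auto
      show "continuous (at lam within {A..Bb} - {}) (\<lambda>t. F t * c' t)"
      proof -
        have "isCont (\<lambda>t. F t * c' t) lam" using contF contc' by (rule isCont_mult)
        thus ?thesis by (rule continuous_at_imp_continuous_within)
      qed
    qed simp
    thus ?thesis unfolding I1_def[abs_def] using at_within_Icc_at[OF lamI] by simp
  qed
  have "((\<lambda>\<mu>. c \<mu> * F \<mu> - I1 \<mu> - K0) has_vector_derivative (c lam * dF + c' lam * F lam - F lam * c' lam - 0)) (at lam)"
    by (intro has_vector_derivative_diff has_vector_derivative_mult hc hF hI has_vector_derivative_const)
  hence "((\<lambda>\<mu>. c \<mu> * F \<mu> - I1 \<mu> - K0) has_vector_derivative (c lam * dF)) (at lam)"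
    by (simp add: mult.commute)
  hence "(\<Phi> has_vector_derivative (c lam * dF)) (at lam)"
  proof (rule has_vector_derivative_transform_within_open)
    show "open U" unfolding U_def by simp
    show "lam \<in> U" unfolding U_def using lamI by simp
    show "\<And>y. y \<in> U \<Longrightarrow> c y * F y - I1 y - K0 = \<Phi> y" using Phi_eq by simp
  qed
  thus ?thesis unfolding \<Phi>_def[abs_def] z_def .
qed

end

theorem mainTheorem8:
  fixes I :: "nat set" and D :: "vec set" and H :: "vec \<Rightarrow> vec"
    and E :: "real \<Rightarrow> vec \<Rightarrow> vec" and f g :: vec and lam :: real
    and dF :: complex and chi :: "real \<Rightarrow> complex"
  assumes "selfadjoint I D H"
    and "spectral_family_of I D H E"
    and "f \<in> l2 I" and "g \<in> l2 I"
    and "((\<lambda>\<mu>. ip (E \<mu> f) g) has_vector_derivative dF) (at lam)"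
    and "C0_infty chi"
  shows "((\<lambda>\<mu>. ip (E \<mu> (fcalc I E chi f)) g) has_vector_derivative (chi lam * dF)) (at lam)"
proof -
  have sf: "spectral_family I E" using assms(2) unfolding spectral_family_of_def by blast
  obtain c' B where dc: "\<forall>t. (chi has_vector_derivative c' t) (at t)" and cc: "continuous_on UNIV c'"
    and cb: "\<forall>t. norm (chi t) \<le> B"
    using C0_props[OF assms(6)] by blast
  interpret sfc I E chi c' B
    by unfold_locales (use sf dc cc cb in auto)
  show ?thesis by (rule main_deriv[OF assms(3,4,5)])
qed

end
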